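(* Let $T$ be a tree of order $n$, and let $d_i$ denote the number of dominating sets of $T$ of size $i$. Then $$d_{\left\lceil\frac{n+2\Gamma(T)-2}{3}\right\rceil}\ge\cdots\ge d_{n-1}\ge d_n.$$
   Context: A dominating set of a graph $G=(V,E)$ is a set $S\subseteq V$ such that every vertex is in $S$ or adjacent to a vertex of $S$; it is minimal if no proper subset is dominating. $\Gamma(T)$ is the maximum size of a minimal dominating set of $T$. *)

theory Defs
  imports Complex_Main
begin

definition simple_graph :: "'a set \<Rightarrow> ('a \<Rightarrow> 'a \<Rightarrow> bool) \<Rightarrow> bool" where
  "simple_graph V adj \<longleftrightarrow> finite V \<and>
     (\<forall>u v. adj u v \<longrightarrow> u \<in> V \<and> v \<in> V) \<and>
     (\<forall>u v. adj u v \<longrightarrow> adj v u) \<and> (\<forall>v. \<not> adj v v)"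

definition connected_graph :: "'a set \<Rightarrow> ('a \<Rightarrow> 'a \<Rightarrow> bool) \<Rightarrow> bool" where
  "connected_graph V adj \<longleftrightarrow> (\<forall>u\<in>V. \<forall>v\<in>V. adj\<^sup>*\<^sup>* u v)"

definition is_cycle :: "'a set \<Rightarrow> ('a \<Rightarrow> 'a \<Rightarrow> bool) \<Rightarrow> 'a list \<Rightarrow> bool" where
  "is_cycle V adj xs \<longleftrightarrow> length xs \<ge> 3 \<and> distinct xs \<and> set xs \<subseteq> V \<and>
     (\<forall>i. Suc i < length xs \<longrightarrow> adj (xs ! i) (xs ! Suc i)) \<and>
     adj (last xs) (hd xs)"

definition is_tree :: "'a set \<Rightarrow> ('a \<Rightarrow> 'a \<Rightarrow> bool) \<Rightarrow> bool" where
  "is_tree V adj \<longleftrightarrow> simple_graph V adj \<and> V \<noteq> {} \<and> connected_graph V adj \<and>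
     (\<nexists>xs. is_cycle V adj xs)"

definition dominating :: "'a set \<Rightarrow> ('a \<Rightarrow> 'a \<Rightarrow> bool) \<Rightarrow> 'a set \<Rightarrow> bool" where
  "dominating V adj S \<longleftrightarrow> S \<subseteq> V \<and> (\<forall>v\<in>V. v \<in> S \<or> (\<exists>u\<in>S. adj v u))"

definition minimal_dominating :: "'a set \<Rightarrow> ('a \<Rightarrow> 'a \<Rightarrow> bool) \<Rightarrow> 'a set \<Rightarrow> bool" where
  "minimal_dominating V adj S \<longleftrightarrow> dominating V adj S \<and>
     (\<forall>S'. S' \<subset> S \<longrightarrow> \<not> dominating V adj S')"

definition upper_domination :: "'a set \<Rightarrow> ('a \<Rightarrow> 'a \<Rightarrow> bool) \<Rightarrow> nat" where
  "upper_domination V adj = Max {card S | S. minimal_dominating V adj S}"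

definition dom_count :: "'a set \<Rightarrow> ('a \<Rightarrow> 'a \<Rightarrow> bool) \<Rightarrow> nat \<Rightarrow> nat" where
  "dom_count V adj i = card {S. dominating V adj S \<and> card S = i}"

end

theory Submission
  imports Defs
begin

definition indep_set :: "('a \<Rightarrow> 'a \<Rightarrow> bool) \<Rightarrow> 'a set \<Rightarrow> bool" where
  "indep_set adj J \<longleftrightarrow> (\<forall>u\<in>J. \<forall>v\<in>J. \<not> adj u v)"

lemma leaf_exists:
  assumes sg: "simple_graph V adj" and nc: "\<nexists>xs. is_cycle V adj xs"
    and W: "W \<subseteq> V" "W \<noteq> {}"
  shows "\<exists>x\<in>W. \<forall>y z. y \<in> W \<longrightarrow> z \<in> W \<longrightarrow> adj x y \<longrightarrow> adj x z \<longrightarrow> y = z"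
proof -
  define P where "P xs \<longleftrightarrow> xs \<noteq> [] \<and> distinct xs \<and> set xs \<subseteq> W \<and>
     (\<forall>i. Suc i < length xs \<longrightarrow> adj (xs!i) (xs!Suc i))" for xs
  have fin: "finite W" using sg W unfolding simple_graph_def by (auto intro: finite_subset)
  have symm: "\<And>u v. adj u v \<Longrightarrow> adj v u" and irr: "\<And>v. \<not> adj v v"
    using sg unfolding simple_graph_def by auto
  obtain w where "w \<in> W" using W by auto
  hence "P [w]" by (simp add: P_def)
  moreover have "\<forall>ys. P ys \<longrightarrow> length ys < card W + 1"
  proof (intro allI impI)
    fix ys assume "P ys"
    then have "card (set ys) \<le> card W" "distinct ys" using fin by (auto simp: P_def intro: card_mono)
    then show "length ys < card W + 1" by (simp add: distinct_card)
  qed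
  ultimately obtain xs where xs: "P xs" and mx: "\<forall>ys. P ys \<longrightarrow> length ys \<le> length xs"
    using Lattices_Big.ex_has_greatest_nat[of P "[w]" length "card W + 1"] by blast
  have ne: "xs \<noteq> []" using xs by (simp add: P_def)
  have hdx: "hd xs = xs ! 0" using ne by (simp add: hd_conv_nth)
  show ?thesis
  proof (rule bexI[of _ "hd xs"])
    show "hd xs \<in> W" using xs ne by (auto simp: P_def)
    show "\<forall>y z. y \<in> W \<longrightarrow> z \<in> W \<longrightarrow> adj (hd xs) y \<longrightarrow> adj (hd xs) z \<longrightarrow> y = z"
    proof (intro allI impI, rule ccontr)
      fix y z assume y: "y\<in>W" and z: "z\<in>W" and ay: "adj (hd xs) y" and az: "adj (hd xs) z" and nyz: "y \<noteq> z"
      have inset: "u \<in> set xs" if "u \<in> W" "adj (hd xs) u" for u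
      proof (rule ccontr)
        assume un: "u \<notin> set xs"
        have "P (u # xs)"
          unfolding P_def
        proof (intro conjI allI impI)
          show "distinct (u # xs)" using un xs by (simp add: P_def)
          show "set (u # xs) \<subseteq> W" using that xs by (simp add: P_def)
          fix i assume i: "Suc i < length (u # xs)"
          show "adj ((u # xs) ! i) ((u # xs) ! Suc i)"
          proof (cases i)
            case 0
            then show ?thesis using symm[OF that(2)] hdx by simp
          next
            case (Suc j)
            then show ?thesis using xs i by (simp add: P_def)
          qed
        qed simp
        then show False using mx by fastforce
      qed
      obtain a where a: "a < length xs" "xs!a = y" using inset[OF y ay] by (auto simp: in_set_conv_nth)
      obtain b where b: "b < length xs" "xs!b = z" using inset[OF z az] by (auto simp: in_set_conv_nth)
      have a0: "a \<noteq> 0" by (metis a(2) ay hdx irr)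
      have b0: "b \<noteq> 0" by (metis b(2) az hdx irr)
      have "a \<noteq> b" using a b nyz by auto
      then obtain j where j: "2 \<le> j" "j < length xs" "adj (hd xs) (xs!j)"
        using a b a0 b0 ay az by (metis One_nat_def Suc_1 Suc_leI le_neq_implies_less linorder_neqE_nat not_gr0)
      have "is_cycle V adj (take (Suc j) xs)"
        unfolding is_cycle_def
      proof (intro conjI allI impI)
        show "3 \<le> length (take (Suc j) xs)" using j by simp
        show "distinct (take (Suc j) xs)" using xs by (simp add: P_def)
        show "set (take (Suc j) xs) \<subseteq> V" using xs W by (meson P_def order_trans set_take_subset)
        fix i assume "Suc i < length (take (Suc j) xs)"
        then show "adj (take (Suc j) xs ! i) (take (Suc j) xs ! Suc i)" using xs by (simp add: P_def)
      next
        have "last (take (Suc j) xs) = xs ! j" using j by (subst last_conv_nth) (auto simp: min_def intro: arg_cong[where f="nth xs"])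
        moreover have "hd (take (Suc j) xs) = hd xs" using j ne by simp
        ultimately show "adj (last (take (Suc j) xs)) (hd (take (Suc j) xs))" using symm j by simp
      qed
      then show False using nc by blast
    qed
  qed
qed


lemma indep_half:
  assumes sg: "simple_graph V adj" and nc: "\<nexists>xs. is_cycle V adj xs"
  shows "W \<subseteq> V \<Longrightarrow> \<exists>J\<subseteq>W. indep_set adj J \<and> card W \<le> 2 * card J"
proof (induction "card W" arbitrary: W rule: less_induct)
  case less
  have fin: "finite W" using sg less.prems unfolding simple_graph_def by (auto intro: finite_subset)
  have symm: "\<And>u v. adj u v \<Longrightarrow> adj v u" and irr: "\<And>v. \<not> adj v v"
    using sg unfolding simple_graph_def by auto
  show ?case
  proof (cases "W = {}")
    case True
    then show ?thesis by (auto simp: indep_set_def)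
  next
    case False
    obtain x where x: "x \<in> W" and lf: "\<forall>y z. y \<in> W \<longrightarrow> z \<in> W \<longrightarrow> adj x y \<longrightarrow> adj x z \<longrightarrow> y = z"
      using leaf_exists[OF sg nc less.prems False] by blast
    show ?thesis
    proof (cases "\<exists>y\<in>W. adj x y")
      case True
      then obtain y where y: "y \<in> W" "adj x y" by blast
      have xy: "x \<noteq> y" using y irr by auto
      define W' where "W' = W - {x, y}"
      have "card {x, y} \<le> card W" using fin x y by (intro card_mono) auto
      then have cw: "card W = card W' + 2" using fin x y xy unfolding W'_def
        by (simp add: card_Diff_subset)
      then obtain J' where J': "J' \<subseteq> W'" "indep_set adj J'" "card W' \<le> 2 * card J'"
        using less.hyps[of W'] less.prems unfolding W'_def by force
      have xn: "x \<notin> J'" using J' unfolding W'_def by auto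
      have finJ: "finite J'" using J' fin unfolding W'_def by (meson finite_Diff finite_subset)
      have "indep_set adj (insert x J')"
        unfolding indep_set_def
      proof (intro ballI)
        fix u v assume u: "u \<in> insert x J'" and v: "v \<in> insert x J'"
        have nx: "\<not> adj x w" if "w \<in> J'" for w
        proof
          assume "adj x w"
          then have "w = y" using lf y that J' unfolding W'_def by blast
          then show False using that J' unfolding W'_def by auto
        qed
        show "\<not> adj u v" using u v nx irr symm J'(2) unfolding indep_set_def by blast
      qed
      moreover have "insert x J' \<subseteq> W" using J' x unfolding W'_def by auto
      moreover have "card W \<le> 2 * card (insert x J')" using cw J' xn finJ by simp
      ultimately show ?thesis by blast
    next
      case False
      define W' where "W' = W - {x}"
      have cw: "card W = card W' + 1" using fin x unfolding W'_def
        using card_Suc_Diff1 by fastforce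
      then obtain J' where J': "J' \<subseteq> W'" "indep_set adj J'" "card W' \<le> 2 * card J'"
        using less.hyps[of W'] less.prems unfolding W'_def by force
      have xn: "x \<notin> J'" using J' unfolding W'_def by auto
      have finJ: "finite J'" using J' fin unfolding W'_def by (meson finite_Diff finite_subset)
      have "indep_set adj (insert x J')"
        unfolding indep_set_def
      proof (intro ballI)
        fix u v assume u: "u \<in> insert x J'" and v: "v \<in> insert x J'"
        have nx: "\<not> adj x w" if "w \<in> J'" for w using False that J' unfolding W'_def by blast
        show "\<not> adj u v" using u v nx irr symm J'(2) unfolding indep_set_def by blast
      qed
      moreover have "insert x J' \<subseteq> W" using J' x unfolding W'_def by auto
      moreover have "card W \<le> 2 * card (insert x J')" using cw J' xn finJ by simp
      ultimately show ?thesis by blast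
    qed
  qed
qed

lemma indep_le_gamma:
  assumes sg: "simple_graph V adj" and J: "J \<subseteq> V" "indep_set adj J"
  shows "card J \<le> upper_domination V adj"
proof -
  have fin: "finite V" using sg unfolding simple_graph_def by auto
  have symm: "\<And>u v. adj u v \<Longrightarrow> adj v u" and irr: "\<And>v. \<not> adj v v"
    using sg unfolding simple_graph_def by auto
  define P where "P K \<longleftrightarrow> J \<subseteq> K \<and> K \<subseteq> V \<and> indep_set adj K" for K
  have "P J" using J by (simp add: P_def)
  moreover have "\<forall>K. P K \<longrightarrow> card K < card V + 1"
    using fin by (auto simp: P_def intro: card_mono le_imp_less_Suc)
  ultimately obtain K where K: "P K" and mx: "\<forall>K'. P K' \<longrightarrow> card K' \<le> card K"
    using Lattices_Big.ex_has_greatest_nat[of P J card "card V + 1"] by blast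
  have finK: "finite K" using K fin by (auto simp: P_def intro: finite_subset)
  have dom: "dominating V adj K"
    unfolding dominating_def
  proof (intro conjI ballI)
    show "K \<subseteq> V" using K by (simp add: P_def)
    fix v assume v: "v \<in> V"
    show "v \<in> K \<or> (\<exists>u\<in>K. adj v u)"
    proof (rule ccontr)
      assume c: "\<not> (v \<in> K \<or> (\<exists>u\<in>K. adj v u))"
      have "P (insert v K)" using K c v irr symm unfolding P_def indep_set_def by blast
      then have "card (insert v K) \<le> card K" using mx by blast
      then show False using c finK by simp
    qed
  qed
  have md: "minimal_dominating V adj K"
    unfolding minimal_dominating_def
  proof (intro conjI allI impI dom)
    fix S' assume S': "S' \<subset> K"
    then obtain x where x: "x \<in> K" "x \<notin> S'" by blast
    have "x \<in> V" using K x by (auto simp: P_def)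
    moreover have "\<not> (\<exists>u\<in>S'. adj x u)" using K x S' unfolding P_def indep_set_def by blast
    ultimately show "\<not> dominating V adj S'" using x unfolding dominating_def by blast
  qed
  have "finite {card S | S. minimal_dominating V adj S}"
  proof (rule finite_subset[of _ "card ` Pow V"])
    show "{card S | S. minimal_dominating V adj S} \<subseteq> card ` Pow V"
      unfolding minimal_dominating_def dominating_def by auto
  qed (use fin in simp)
  then have "card K \<le> upper_domination V adj"
    unfolding upper_domination_def using md by (auto intro: Max_ge)
  moreover have "card J \<le> card K" using K finK by (auto simp: P_def intro: card_mono)
  ultimately show ?thesis by simp
qed


lemma gamma_bound:
  assumes sg: "simple_graph V adj" and nc: "\<nexists>xs. is_cycle V adj xs"
    and dom: "dominating V adj S"
  shows "2 * card {x\<in>S. \<not> dominating V adj (S - {x})} + card {x\<in>S. dominating V adj (S - {x})}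
           \<le> 2 * upper_domination V adj"
proof -
  have finV: "finite V" using sg unfolding simple_graph_def by auto
  have symm: "\<And>u v. adj u v \<Longrightarrow> adj v u" and irr: "\<And>v. \<not> adj v v"
    using sg unfolding simple_graph_def by auto
  have SV: "S \<subseteq> V" using dom unfolding dominating_def by auto
  have finS: "finite S" using SV finV by (auto intro: finite_subset)
  define N where "N = {x\<in>S. \<not> dominating V adj (S - {x})}"
  define R where "R = {x\<in>S. dominating V adj (S - {x})}"
  define Ni where "Ni = {v\<in>S. \<forall>u\<in>S. \<not> adj v u}"
  define Nx where "Nx = N - Ni"
  have NiN: "Ni \<subseteq> N"
  proof
    fix v assume v: "v \<in> Ni"
    then have "v \<in> V" "v \<in> S" using SV unfolding Ni_def by auto
    moreover have "\<not> (\<exists>u\<in>S - {v}. adj v u)" using v unfolding Ni_def by auto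
    ultimately show "v \<in> N" unfolding N_def dominating_def by auto
  qed
  have priv: "\<exists>w. w \<in> V - S \<and> adj w v \<and> (\<forall>u\<in>S. adj w u \<longrightarrow> u = v)" if v: "v \<in> Nx" for v
  proof -
    have vS: "v \<in> S" and nd: "\<not> dominating V adj (S - {v})" and vni: "v \<notin> Ni"
      using v unfolding Nx_def N_def by auto
    obtain w where w: "w \<in> V" "w \<notin> S - {v}" "\<not> (\<exists>u\<in>S - {v}. adj w u)"
      using nd SV unfolding dominating_def by auto
    have "w \<noteq> v"
    proof
      assume "w = v"
      then have "\<forall>u\<in>S. \<not> adj v u" using w irr by auto
      then show False using vni vS unfolding Ni_def by auto
    qed
    then have wS: "w \<notin> S" using w by auto
    then obtain u where "u \<in> S" "adj w u" using dom w unfolding dominating_def by auto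
    then have "u = v" using w by auto
    then show ?thesis using w wS \<open>adj w u\<close> by auto
  qed
  obtain p where p: "\<forall>v\<in>Nx. p v \<in> V - S \<and> adj (p v) v \<and> (\<forall>u\<in>S. adj (p v) u \<longrightarrow> u = v)"
  proof -
    have "\<forall>v\<in>Nx. \<exists>w. w \<in> V - S \<and> adj w v \<and> (\<forall>u\<in>S. adj w u \<longrightarrow> u = v)"
      using priv by blast
    from bchoice[OF this] show ?thesis using that by blast
  qed
  have injp: "inj_on p Nx"
  proof (rule inj_onI)
    fix v w assume v: "v \<in> Nx" and w: "w \<in> Nx" and e: "p v = p w"
    have "w \<in> S" using w unfolding Nx_def N_def by auto
    moreover have "adj (p v) w" using p w e by auto
    ultimately show "v = w" using p v by auto
  qed
  define W' where "W' = V - Ni - {x. \<exists>u\<in>Ni. adj x u}"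
  have NxS: "Nx \<subseteq> S" and RS: "R \<subseteq> S" and NiS: "Ni \<subseteq> S"
    unfolding Nx_def N_def R_def Ni_def by auto
  have noadjNi: "\<not> adj x u" if "x \<in> S" "u \<in> Ni" for x u
    using that symm unfolding Ni_def by blast
  have RNi: "R \<inter> Ni = {}" using NiN unfolding R_def N_def by auto
  have sub: "Nx \<union> R \<union> p ` Nx \<subseteq> W'"
  proof -
    have "Nx \<subseteq> W'" using NxS SV noadjNi unfolding W'_def Nx_def by auto
    moreover have "R \<subseteq> W'" using RS SV noadjNi RNi unfolding W'_def by auto
    moreover have "p ` Nx \<subseteq> W'"
    proof
      fix y assume "y \<in> p ` Nx"
      then obtain v where v: "v \<in> Nx" "y = p v" by auto
      have "y \<in> V" "y \<notin> S" using p v by auto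
      moreover have "\<not> adj y u" if "u \<in> Ni" for u
      proof
        assume "adj y u"
        then have "u = v" using p v that NiS by auto
        then show False using that v unfolding Nx_def by auto
      qed
      ultimately show "y \<in> W'" using NiS unfolding W'_def by auto
    qed
    ultimately show ?thesis by auto
  qed
  have finNx: "finite Nx" and finR: "finite R" using NxS RS finS by (auto intro: finite_subset)
  have d1: "Nx \<inter> R = {}" unfolding Nx_def N_def R_def by auto
  have d2: "(Nx \<union> R) \<inter> p ` Nx = {}"
  proof -
    have "p v \<notin> S" if "v \<in> Nx" for v using p that by blast
    then show ?thesis using NxS RS by blast
  qed
  have "card (Nx \<union> R \<union> p ` Nx) = card Nx + card R + card Nx"
    using d1 d2 finNx finR injp by (simp add: card_Un_disjoint card_image)
  moreover have "card (Nx \<union> R \<union> p ` Nx) \<le> card W'"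
    using sub finV by (intro card_mono) (auto simp: W'_def)
  ultimately have c1: "2 * card Nx + card R \<le> card W'" by simp
  obtain J' where J': "J' \<subseteq> W'" "indep_set adj J'" "card W' \<le> 2 * card J'"
    using indep_half[OF sg nc, of W'] unfolding W'_def by auto
  define J where "J = Ni \<union> J'"
  have finJ': "finite J'" using J' finV by (auto simp: W'_def intro: finite_subset)
  have finNi: "finite Ni" using NiS finS by (auto intro: finite_subset)
  have dJ: "Ni \<inter> J' = {}" using J' unfolding W'_def by auto
  have cJ: "card J = card Ni + card J'" unfolding J_def using dJ finJ' finNi by (simp add: card_Un_disjoint)
  have JV: "J \<subseteq> V" using J' NiS SV unfolding J_def W'_def by auto
  have iJ: "indep_set adj J"
    unfolding indep_set_def J_def
  proof (intro ballI)
    fix u v assume u: "u \<in> Ni \<union> J'" and v: "v \<in> Ni \<union> J'"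
    have a1: "\<not> adj a b" if "a \<in> Ni" "b \<in> Ni" for a b using that noadjNi NiS by blast
    have a2: "\<not> adj a b" if "a \<in> J'" "b \<in> Ni" for a b using that J'(1) unfolding W'_def by blast
    have a3: "\<not> adj a b" if "a \<in> J'" "b \<in> J'" for a b using that J'(2) unfolding indep_set_def by blast
    show "\<not> adj u v" using u v a1 a2 a3 symm by blast
  qed
  have cN: "card N = card Ni + card Nx"
  proof -
    have "N = Ni \<union> Nx" using NiN unfolding Nx_def by auto
    moreover have "Ni \<inter> Nx = {}" unfolding Nx_def by auto
    ultimately show ?thesis using finNi finNx by (simp add: card_Un_disjoint)
  qed
  have "card J \<le> upper_domination V adj" using indep_le_gamma[OF sg JV iJ] .
  then show ?thesis using c1 J' cJ cN unfolding N_def[symmetric] R_def[symmetric] by linarith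
qed


theorem theorem4p11:
  fixes V :: "'a set" and adj :: "'a \<Rightarrow> 'a \<Rightarrow> bool" and n :: nat
  assumes "is_tree V adj" and "card V = n"
  shows "\<forall>i. nat \<lceil>(real n + 2 * real (upper_domination V adj) - 2) / 3\<rceil> \<le> i \<and> i < n
           \<longrightarrow> dom_count V adj (Suc i) \<le> dom_count V adj i"
proof (intro allI impI)
  fix i assume hi: "nat \<lceil>(real n + 2 * real (upper_domination V adj) - 2) / 3\<rceil> \<le> i \<and> i < n"
  define G where "G = upper_domination V adj"
  have sg: "simple_graph V adj" and nc: "\<nexists>xs. is_cycle V adj xs"
    using assms(1) unfolding is_tree_def by auto
  have finV: "finite V" using sg unfolding simple_graph_def by auto
  have "(real n + 2 * real G - 2) / 3 \<le> real i"
  proof -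
    have "(real n + 2 * real G - 2) / 3 \<le> real_of_int \<lceil>(real n + 2 * real G - 2) / 3\<rceil>"
      by (rule le_of_int_ceiling)
    also have "\<dots> \<le> real i" using hi unfolding G_def by linarith
    finally show ?thesis .
  qed
  then have "real (n + 2 * G) \<le> real (3 * i + 2)" by simp
  then have th: "n + 2 * G \<le> 3 * i + 2" by (simp only: of_nat_le_iff)
  have inl: "i < n" using hi by simp
  define A where "A = {S. dominating V adj S \<and> card S = Suc i}"
  define B where "B = {S. dominating V adj S \<and> card S = i}"
  define r where "r S = {x\<in>S. dominating V adj (S - {x})}" for S
  define P where "P = Sigma A r"
  define Q where "Q = Sigma B (\<lambda>T. V - T)"
  have finA: "finite A" by (rule finite_subset[of _ "Pow V"]) (auto simp: A_def dominating_def finV)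
  have finB: "finite B" by (rule finite_subset[of _ "Pow V"]) (auto simp: B_def dominating_def finV)
  have rbound: "n - i \<le> card (r S)" if S: "S \<in> A" for S
  proof -
    have dom: "dominating V adj S" and cS: "card S = Suc i" using S unfolding A_def by auto
    have finS: "finite S" using dom finV unfolding dominating_def by (auto intro: finite_subset)
    have gb: "2 * card {x\<in>S. \<not> dominating V adj (S - {x})} + card (r S) \<le> 2 * G"
      using gamma_bound[OF sg nc dom] unfolding G_def r_def .
    have "S = {x\<in>S. \<not> dominating V adj (S - {x})} \<union> r S" unfolding r_def by auto
    then have "card S = card {x\<in>S. \<not> dominating V adj (S - {x})} + card (r S)"
      using finS by (metis (no_types, lifting) card_Un_disjoint finite_Un disjoint_iff mem_Collect_eq r_def)
    then show ?thesis using gb cS th by linarith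
  qed
  have cP: "card A * (n - i) \<le> card P"
  proof -
    have "card P = (\<Sum>S\<in>A. card (r S))"
      unfolding P_def using finA finV
      by (intro card_SigmaI) (auto simp: r_def A_def dominating_def intro: finite_subset)
    moreover have "of_nat (card A) * (n - i) \<le> (\<Sum>S\<in>A. card (r S))"
      by (rule sum_bounded_below) (rule rbound)
    ultimately show ?thesis by simp
  qed
  have cQ: "card Q = card B * (n - i)"
  proof -
    have "card Q = (\<Sum>T\<in>B. card (V - T))"
      unfolding Q_def using finB finV by (intro card_SigmaI) auto
    also have "\<dots> = (\<Sum>T\<in>B. n - i)"
    proof (rule sum.cong)
      fix T assume "T \<in> B"
      then have "T \<subseteq> V" "card T = i" unfolding B_def dominating_def by auto
      then show "card (V - T) = n - i" using finV assms(2) by (simp add: card_Diff_subset finite_subset)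
    qed simp
    finally show ?thesis by simp
  qed
  have "card P \<le> card Q"
  proof (rule card_inj_on_le[of "\<lambda>(S, x). (S - {x}, x)"])
    show "inj_on (\<lambda>(S, x). (S - {x}, x)) P"
    proof (rule inj_onI, clarsimp)
      fix S x S' assume "(S, x) \<in> P" "(S', x) \<in> P" "S - {x} = S' - {x}"
      then show "S = S'" unfolding P_def r_def by (metis (no_types, lifting) SigmaE2 insert_Diff mem_Collect_eq)
    qed
    show "(\<lambda>(S, x). (S - {x}, x)) ` P \<subseteq> Q"
    proof clarsimp
      fix S x assume "(S, x) \<in> P"
      then have S: "S \<in> A" and x: "x \<in> S" "dominating V adj (S - {x})" unfolding P_def r_def by auto
      have finS: "finite S" using S finV unfolding A_def dominating_def by (auto intro: finite_subset)
      have "card (S - {x}) = i" using S x finS unfolding A_def by simp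
      moreover have "x \<in> V" using S x unfolding A_def dominating_def by auto
      ultimately show "(S - {x}, x) \<in> Q" using x unfolding Q_def B_def by auto
    qed
    show "finite Q" unfolding Q_def using finB finV by auto
  qed
  then have "card A * (n - i) \<le> card B * (n - i)" using cP cQ by linarith
  then have "card A \<le> card B" using inl by (simp add: mult_le_cancel2)
  then show "dom_count V adj (Suc i) \<le> dom_count V adj i"
    unfolding dom_count_def A_def B_def .
qed

end
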